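(* Assume the standing setting described in the context. Then $\mathcal{G}(t)\lesssim1$ and $\|\rho(t)\|_\infty\lesssim(t+\alpha)^{-d}$.
   Context: Standing setting: $d\ge4$, $\alpha>0$, $f_0\in C^1_0(\mathbb{R}^{2d})$ nonnegative with $\langle x-\alpha v\rangle^pf_0\in W^{1,\infty}(\mathbb{R}^{2d})$ for some $p>d+1$, where $\langle u\rangle=\sqrt{1+|u|^2}$. $f$ is the classical solution on $[0,\infty)$ of the Vlasov–Poisson system $\partial_tf+v\cdot\nabla_xf+E\cdot\nabla_vf=0$, $\rho=\int f\,dv$, $E(t,x)=\frac{1}{d\omega_d}\int\frac{x-y}{|x-y|^d}\rho(t,y)\,dy$ ($\omega_d$ the volume of the unit ball), with $f(0)=f_0$. With $M_k(t)=\iint|x-v(t+\alpha)|^kf\,dv\,dx$, it is assumed that $\|E(t)\|_\infty\lesssim(t+\alpha)^{1-d}$ and $M_k(t)\lesssim1$ for all $0\le k\le n$, for some $n>d(d-1)$. Here $A\lesssim B$ means $A(t)\le CB(t)$ for all $t\ge0$ with $C$ independent of $t$. Define $g(t,x,v)=f(t,x+v(t+\alpha),v)$ and $\mathcal{G}(t)=1+\sup_{x,v}\langle x\rangle^pg(t,x,v)$. *)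

theory Defs
  imports "HOL-Analysis.Analysis"
begin

definition jbr :: "'a::real_normed_vector \<Rightarrow> real" where
  "jbr u = sqrt (1 + (norm u)^2)"

definition C1_on :: "'a::real_normed_vector set \<Rightarrow> ('a \<Rightarrow> 'b::real_normed_vector) \<Rightarrow> bool" where
  "C1_on S h \<longleftrightarrow> (\<exists>Dh :: 'a \<Rightarrow> ('a \<Rightarrow>\<^sub>L 'b).
      (\<forall>z\<in>S. (h has_derivative blinfun_apply (Dh z)) (at z within S)) \<and> continuous_on S Dh)"

definition C1_0 :: "('a::euclidean_space \<Rightarrow> real) \<Rightarrow> bool" where
  "C1_0 h \<longleftrightarrow> C1_on UNIV h \<and> compact (closure {z. h z \<noteq> 0})"

definition W1inf :: "('a::euclidean_space \<Rightarrow> real) \<Rightarrow> bool" where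
  "W1inf h \<longleftrightarrow> bounded (range h) \<and> (\<exists>L. L-lipschitz_on UNIV h)"

definition omega :: "'d::finite itself \<Rightarrow> real" where
  "omega _ = measure lborel (ball (0::real^'d) 1)"

definition rho :: "(real \<Rightarrow> real^'d \<Rightarrow> real^'d \<Rightarrow> real) \<Rightarrow> real \<Rightarrow> real^'d \<Rightarrow> real" where
  "rho f t x = (LINT v|lborel. f t x v)"

definition Efield :: "(real \<Rightarrow> real^'d \<Rightarrow> real^'d \<Rightarrow> real) \<Rightarrow> real \<Rightarrow> real^'d \<Rightarrow> real^'d" where
  "Efield f t x = (1 / (real CARD('d) * omega TYPE('d))) *\<^sub>R
      (LINT y|lborel. (rho f t y / norm (x - y) ^ CARD('d)) *\<^sub>R (x - y))"

definition classical_solution ::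
  "(real \<Rightarrow> real^'d \<Rightarrow> real^'d \<Rightarrow> real) \<Rightarrow> (real^'d \<Rightarrow> real^'d \<Rightarrow> real) \<Rightarrow> bool" where
  "classical_solution f f0 \<longleftrightarrow>
     (\<exists>Df :: real \<times> ((real^'d) \<times> (real^'d)) \<Rightarrow> ((real \<times> ((real^'d) \<times> (real^'d))) \<Rightarrow>\<^sub>L real).
        (\<forall>z\<in>{0..} \<times> UNIV. ((\<lambda>(t,x,v). f t x v) has_derivative blinfun_apply (Df z))
                                (at z within ({0..} \<times> UNIV))) \<and>
        continuous_on ({0..} \<times> UNIV) Df \<and>
        (\<forall>t\<ge>0. \<forall>x v. blinfun_apply (Df (t,x,v)) (1, v, Efield f t x) = 0)) \<and>
     (\<forall>t\<ge>0. \<forall>x. integrable lborel (\<lambda>v. f t x v)) \<and>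
     (\<forall>t\<ge>0. \<forall>x. integrable lborel (\<lambda>y. (rho f t y / norm (x - y) ^ CARD('d)) *\<^sub>R (x - y))) \<and>
     (\<forall>x v. f 0 x v = f0 x v)"

definition Mom :: "(real \<Rightarrow> real^'d \<Rightarrow> real^'d \<Rightarrow> real) \<Rightarrow> real \<Rightarrow> nat \<Rightarrow> real \<Rightarrow> real" where
  "Mom f \<alpha> k t = (LINT x|lborel. LINT v|lborel. norm (x - (t + \<alpha>) *\<^sub>R v) ^ k * f t x v)"

definition gfun :: "(real \<Rightarrow> real^'d \<Rightarrow> real^'d \<Rightarrow> real) \<Rightarrow> real \<Rightarrow> real \<Rightarrow> real^'d \<Rightarrow> real^'d \<Rightarrow> real" where
  "gfun f \<alpha> t x v = f t (x + (t + \<alpha>) *\<^sub>R v) v"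

definition Gweight :: "(real \<Rightarrow> real^'d \<Rightarrow> real^'d \<Rightarrow> real) \<Rightarrow> real \<Rightarrow> real \<Rightarrow> real \<Rightarrow> real set" where
  "Gweight f \<alpha> p t = (\<lambda>(x,v). jbr x powr p * gfun f \<alpha> t x v) ` UNIV"

definition Gcal :: "(real \<Rightarrow> real^'d \<Rightarrow> real^'d \<Rightarrow> real) \<Rightarrow> real \<Rightarrow> real \<Rightarrow> real \<Rightarrow> real" where
  "Gcal f \<alpha> p t = 1 + Sup (Gweight f \<alpha> p t)"

end

theory Submission
  imports Defs
begin


lemma dir_deriv:
  fixes u :: "'a::real_normed_vector \<Rightarrow> real"
  assumes "(u has_derivative u') (at z)"
  shows "((\<lambda>s. u (z - s *\<^sub>R W)) has_real_derivative (- u' W)) (at 0)"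
proof -
  have lin: "linear u'" using assms has_derivative_linear by blast
  have "((\<lambda>s::real. z - s *\<^sub>R W) has_derivative (\<lambda>s. - (s *\<^sub>R W))) (at 0)"
    by (auto intro!: derivative_eq_intros)
  from has_derivative_compose[OF this, of u u'] assms
  have "((\<lambda>s. u (z - s *\<^sub>R W)) has_derivative (\<lambda>s. u' (- (s *\<^sub>R W)))) (at 0)" by simp
  moreover have "(\<lambda>s. u' (- (s *\<^sub>R W))) = (*) (- u' W)"
    using lin by (auto simp: linear_cmul linear_neg)
  ultimately show ?thesis unfolding has_field_derivative_def by metis
qed

lemma maxdir:
  fixes u h :: "'a::real_normed_vector \<Rightarrow> real"
  assumes du: "(u has_derivative u') (at z)" and dh: "(h has_derivative h') (at z)"
    and hz: "h z \<le> 0" and hW: "h' W > 0" and ep: "\<epsilon> > 0"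
    and mx: "\<And>s. 0 < s \<Longrightarrow> s < \<epsilon> \<Longrightarrow> h (z - s *\<^sub>R W) \<le> 0 \<Longrightarrow> u (z - s *\<^sub>R W) \<le> u z"
  shows "u' W \<ge> 0"
proof (rule ccontr)
  assume "\<not> u' W \<ge> 0"
  hence neg: "- u' W > 0" by simp
  from DERIV_pos_inc_right[OF dir_deriv[OF du] neg] obtain d1 where
    d1: "d1 > 0" "\<And>s. s > 0 \<Longrightarrow> s < d1 \<Longrightarrow> u (z - 0 *\<^sub>R W) < u (z - (0 + s) *\<^sub>R W)" by blast
  from DERIV_neg_dec_right[OF dir_deriv[OF dh, of W]] hW obtain d2 where
    d2: "d2 > 0" "\<And>s. s > 0 \<Longrightarrow> s < d2 \<Longrightarrow> h (z - 0 *\<^sub>R W) > h (z - (0 + s) *\<^sub>R W)" by force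
  define s where "s = min (min d1 d2) \<epsilon> / 2"
  have s: "s > 0" "s < d1" "s < d2" "s < \<epsilon>" using d1 d2 ep by (auto simp: s_def)
  have "h (z - s *\<^sub>R W) \<le> 0" using d2(2)[OF s(1) s(3)] hz by simp
  hence "u (z - s *\<^sub>R W) \<le> u z" using mx s by blast
  moreover have "u z < u (z - s *\<^sub>R W)" using d1(2)[OF s(1) s(2)] by simp
  ultimately show False by simp
qed



lemma dPhi:
  fixes \<alpha> K k s :: real
  assumes "s + \<alpha> > 0"
  shows "((\<lambda>s. exp (K * (s + \<alpha>) powr (-k))) has_real_derivative
     (exp (K * (s + \<alpha>) powr (-k)) * (K * (-k * (s + \<alpha>) powr (-k-1))))) (at s)"
proof -
  have h0: "((\<lambda>s. s + \<alpha>) has_real_derivative 1) (at s)"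
    by (auto intro!: derivative_eq_intros)
  have h1: "((\<lambda>s. (s + \<alpha>) powr (-k)) has_real_derivative (-k * (s + \<alpha>) powr (-k - 1))) (at s)"
    using DERIV_chain2[OF has_real_derivative_powr[OF assms, of "-k"] h0] by simp
  have h2: "((\<lambda>s. K * (s + \<alpha>) powr (-k)) has_real_derivative (K * (-k * (s + \<alpha>) powr (-k - 1)))) (at s)"
    using DERIV_cmult[OF h1] by simp
  show ?thesis
    using DERIV_chain2[OF DERIV_exp h2] by simp
qed

lemma dP:
  fixes \<alpha> p K k :: real and z :: "real \<times> ((real^'d) \<times> (real^'d))"
  assumes T: "fst z + \<alpha> > 0"
  defines "y \<equiv> \<lambda>z::real \<times> ((real^'d) \<times> (real^'d)). fst (snd z) - (fst z + \<alpha>) *\<^sub>R snd (snd z)"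
  defines "Dy \<equiv> \<lambda>dz::real \<times> ((real^'d) \<times> (real^'d)). fst (snd dz) - fst dz *\<^sub>R snd (snd z) - (fst z + \<alpha>) *\<^sub>R snd (snd dz)"
  defines "Q \<equiv> \<lambda>z. 1 + y z \<bullet> y z"
  defines "\<Phi> \<equiv> \<lambda>s. exp (K * (s + \<alpha>) powr (-k))"
  shows "((\<lambda>z. Q z powr (p/2) * \<Phi> (fst z)) has_derivative
    (\<lambda>dz. Q z powr (p/2) * (fst dz * (\<Phi> (fst z) * (K * (-k * (fst z + \<alpha>) powr (-k-1)))))
       + (2 * (y z \<bullet> Dy dz) * (p/2 * Q z powr (p/2 - 1))) * \<Phi> (fst z))) (at z)"
proof -
  have hy: "(y has_derivative Dy) (at z)"
    unfolding y_def Dy_def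
    apply (rule derivative_eq_intros refl | simp)+
    apply (rule ext) apply (simp add: algebra_simps)
    done
  have hQ: "(Q has_derivative (\<lambda>dz. 2 * (y z \<bullet> Dy dz))) (at z)"
    unfolding Q_def
    apply (rule derivative_eq_intros hy refl | simp)+
    apply (rule ext) apply (simp add: inner_commute)
    done
  have Qpos: "Q z > 0" unfolding Q_def by (simp add: add_pos_nonneg)
  have hw: "((\<lambda>z. Q z powr (p/2)) has_derivative (\<lambda>dz. 2 * (y z \<bullet> Dy dz) * (p/2 * Q z powr (p/2 - 1)))) (at z)"
    by (rule DERIV_compose_FDERIV[OF has_real_derivative_powr[OF Qpos, of "p/2"] hQ])
  have hphi: "((\<lambda>z. \<Phi> (fst z)) has_derivative (\<lambda>dz. fst dz * (\<Phi> (fst z) * (K * (-k * (fst z + \<alpha>) powr (-k-1)))))) (at z)"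
    unfolding \<Phi>_def
    using DERIV_compose_FDERIV[where g=fst and x=z and s=UNIV, OF dPhi[OF T, of K k] has_derivative_fst[OF has_derivative_ident]] by simp
  show ?thesis
    using has_derivative_mult[OF hw hphi] by simp
qed


lemma jbr_powr: "jbr (y::'a::real_inner) powr p = (1 + y \<bullet> y) powr (p/2)"
proof -
  have "jbr y = (1 + y \<bullet> y) powr (1/2)"
    unfolding jbr_def by (simp add: powr_half_sqrt add_nonneg_nonneg power2_norm_eq_inner)
  thus ?thesis by (simp add: powr_powr)
qed

lemma dh:
  fixes c R :: real and z :: "real \<times> ((real^'d) \<times> (real^'d))"
  shows "((\<lambda>z. (1 + fst (snd z) \<bullet> fst (snd z) + snd (snd z) \<bullet> snd (snd z)) * exp (c * fst z) - R) has_derivative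
    (\<lambda>dz. (2 * (fst (snd z) \<bullet> fst (snd dz)) + 2 * (snd (snd z) \<bullet> snd (snd dz))) * exp (c * fst z)
       + (1 + fst (snd z) \<bullet> fst (snd z) + snd (snd z) \<bullet> snd (snd z)) * (fst dz * c * exp (c * fst z)))) (at z)"
  apply (rule derivative_eq_intros refl | simp)+
  apply (rule ext) apply (simp add: algebra_simps inner_commute)
  done

lemma PW_neg:
  fixes y E :: "'a::real_inner" and T p C k K \<Phi> :: real
  assumes T: "T > 0" and p: "p > 0" and C: "C \<ge> 0" and Kk: "K * k = p * C + 1"
    and E: "norm E \<le> C * T powr (-k-2)" and Phi: "\<Phi> > 0"
  shows "(1 + y \<bullet> y) powr (p/2) * (\<Phi> * (K * (-k * T powr (-k-1))))
     + 2 * (y \<bullet> (- (T *\<^sub>R E))) * (p/2 * (1 + y \<bullet> y) powr (p/2 - 1)) * \<Phi> < 0"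
proof -
  define Q where "Q = 1 + y \<bullet> y"
  have Q1: "Q \<ge> 1" unfolding Q_def by simp
  have ny: "norm y \<le> Q"
  proof (cases "norm y \<le> 1")
    case True thus ?thesis using Q1 by linarith
  next
    case False
    hence "norm y \<le> norm y * norm y" by (simp add: mult_le_cancel_left1)
    also have "\<dots> = y \<bullet> y" by (simp add: power2_norm_eq_inner[symmetric] power2_eq_square)
    finally show ?thesis unfolding Q_def by linarith
  qed
  have 1: "y \<bullet> (- (T *\<^sub>R E)) \<le> Q * (T * norm E)"
  proof -
    have "y \<bullet> (- (T *\<^sub>R E)) \<le> norm y * norm (T *\<^sub>R E)"
      by (metis Cauchy_Schwarz_ineq2 abs_le_D1 inner_minus_right norm_minus_cancel)
    also have "\<dots> = norm y * (T * norm E)" using T by simp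
    also have "\<dots> \<le> Q * (T * norm E)" using ny T by (intro mult_right_mono) auto
    finally show ?thesis .
  qed
  have 2: "T * norm E \<le> C * T powr (-k-1)"
  proof -
    have "T * norm E \<le> T * (C * T powr (-k-2))" using E T by simp
    also have "\<dots> = C * (T * T powr (-k-2))" by simp
    also have "T * T powr (-k-2) = T powr (1 + (-k-2))" using T by (simp add: powr_mult_base)
    also have "1 + (-k-2) = -k-1" by simp
    finally show ?thesis .
  qed
  have 3: "Q powr (p/2 - 1) * Q = Q powr (p/2)"
    using Q1 by (simp add: powr_diff)
  have Qp: "Q powr (p/2) > 0" "Q powr (p/2 - 1) > 0" using Q1 by auto
  have Tp: "T powr (-k-1) > 0" using T by simp
  have "2 * (y \<bullet> (- (T *\<^sub>R E))) * (p/2 * Q powr (p/2 - 1)) * \<Phi>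
      = p * (y \<bullet> (- (T *\<^sub>R E))) * Q powr (p/2 - 1) * \<Phi>" by simp
  also have "\<dots> \<le> p * (Q * (C * T powr (-k-1))) * Q powr (p/2 - 1) * \<Phi>"
  proof -
    have "y \<bullet> (- (T *\<^sub>R E)) \<le> Q * (C * T powr (-k-1))"
      using order_trans[OF 1 mult_left_mono[OF 2]] Q1 by simp
    thus ?thesis using p Qp Phi by (intro mult_right_mono mult_left_mono) auto
  qed
  also have "\<dots> = p * C * (Q powr (p/2 - 1) * Q) * T powr (-k-1) * \<Phi>" by (simp add: ac_simps)
  also have "\<dots> = p * C * Q powr (p/2) * T powr (-k-1) * \<Phi>" by (simp add: 3)
  finally have A: "2 * (y \<bullet> (- (T *\<^sub>R E))) * (p/2 * Q powr (p/2 - 1)) * \<Phi> \<le> p * C * Q powr (p/2) * T powr (-k-1) * \<Phi>" .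
  define X where "X = Q powr (p/2) * T powr (-k-1) * \<Phi>"
  have A': "2 * (y \<bullet> (- (T *\<^sub>R E))) * (p/2 * Q powr (p/2 - 1)) * \<Phi> \<le> p * C * X"
    using A unfolding X_def by (simp add: ac_simps)
  have B: "Q powr (p/2) * (\<Phi> * (K * (-k * T powr (-k-1)))) = - (K * k) * X"
    unfolding X_def by (simp add: ac_simps)
  have B2: "- (K * k) * X = - (p * C * X) - X" using Kk by (simp add: algebra_simps)
  have "X > 0" using Qp Tp Phi unfolding X_def by simp
  hence "Q powr (p/2) * (\<Phi> * (K * (-k * T powr (-k-1)))) + 2 * (y \<bullet> (- (T *\<^sub>R E))) * (p/2 * Q powr (p/2 - 1)) * \<Phi> < 0"
    using A' B B2 by linarith
  thus ?thesis unfolding Q_def .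
qed



lemma weighted_bound:
  fixes f :: "real \<Rightarrow> real^'d \<Rightarrow> real^'d \<Rightarrow> real"
    and f0 :: "real^'d \<Rightarrow> real^'d \<Rightarrow> real" and \<alpha> p :: real
  assumes d4: "CARD('d) \<ge> 4" and alpha_pos: "\<alpha> > 0" and p: "p > 0"
    and f0_weighted: "W1inf (\<lambda>(x,v). jbr (x - \<alpha> *\<^sub>R v) powr p * f0 x v)"
    and sol: "classical_solution f f0"
    and E_decay: "\<exists>C. \<forall>t\<ge>0. \<forall>x. norm (Efield f t x) \<le> C * (t + \<alpha>) powr (1 - real CARD('d))"
  shows "\<exists>A. \<forall>t\<ge>0. \<forall>x v. \<bar>f t x v\<bar> * jbr (x - (t + \<alpha>) *\<^sub>R v) powr p \<le> A"
proof -
  define S :: "(real \<times> ((real^'d) \<times> (real^'d))) set" where "S = {0..} \<times> UNIV"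
  note sol' = sol[unfolded classical_solution_def]
  obtain Df where dF0: "\<forall>z\<in>{0..} \<times> UNIV. ((\<lambda>(t,x,v). f t x v) has_derivative blinfun_apply (Df z)) (at z within ({0..} \<times> UNIV))"
     and cDf: "continuous_on ({0..} \<times> UNIV) Df"
     and tr0: "\<forall>t\<ge>0. \<forall>x v. blinfun_apply (Df (t,x,v)) (1, v, Efield f t x) = 0"
    using conjunct1[OF sol'] by (elim exE conjE)
  have dF: "((\<lambda>(t,x,v). f t x v) has_derivative blinfun_apply (Df z)) (at z within S)" if "z \<in> S" for z
    using dF0 that unfolding S_def by (rule bspec)
  have tr: "blinfun_apply (Df (t,x,v)) (1, v, Efield f t x) = 0" if "t \<ge> 0" for t x v
    using tr0 that by simp
  have init: "\<And>x v. f 0 x v = f0 x v" using conjunct2[OF conjunct2[OF conjunct2[OF sol']]] by simp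
  obtain C where C: "\<And>t x. t \<ge> 0 \<Longrightarrow> norm (Efield f t x) \<le> C * (t + \<alpha>) powr (1 - real CARD('d))"
    using E_decay by blast
  define dd where "dd = real CARD('d)"
  define k where "k = dd - 3"
  have k: "k > 0" using d4 unfolding k_def dd_def by simp
  have "0 \<le> C * \<alpha> powr (1 - dd)" unfolding dd_def using C[of 0 0] by simp (meson norm_ge_zero order_trans)
  hence C0: "C \<ge> 0" using alpha_pos by (simp add: zero_le_mult_iff)
  define B where "B = C * \<alpha> powr (1 - dd)"
  have B0: "B \<ge> 0" unfolding B_def using C0 by simp
  have EB: "norm (Efield f t x) \<le> B" if "t \<ge> 0" for t x
  proof -
    have "(t + \<alpha>) powr (1 - dd) \<le> \<alpha> powr (1 - dd)"
      using that alpha_pos d4 by (intro powr_mono2') (auto simp: dd_def)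
    hence "C * (t + \<alpha>) powr (1 - dd) \<le> B" unfolding B_def using C0 by (rule mult_left_mono)
    thus ?thesis using C[OF that, of x] unfolding dd_def by simp
  qed
  have Ek: "norm (Efield f t x) \<le> C * (t + \<alpha>) powr (-k-2)" if "t \<ge> 0" for t x
    using C[OF that, of x] unfolding k_def dd_def by (simp add: algebra_simps)
  obtain M where M: "\<And>x v. \<bar>jbr (x - \<alpha> *\<^sub>R v) powr p * f0 x v\<bar> \<le> M"
  proof -
    from f0_weighted obtain a where "\<forall>w \<in> range (\<lambda>(x,v). jbr (x - \<alpha> *\<^sub>R v) powr p * f0 x v). norm w \<le> a"
      unfolding W1inf_def bounded_iff by blast
    hence "\<And>x v. \<bar>jbr (x - \<alpha> *\<^sub>R v) powr p * f0 x v\<bar> \<le> a"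
      by (metis (no_types, lifting) UNIV_I case_prod_conv image_eqI real_norm_def)
    thus ?thesis using that by blast
  qed
  have M0: "M \<ge> 0" using M[of 0 0] by linarith
  define K where "K = (p * C + 1) / k"
  have Kk: "K * k = p * C + 1" using k by (simp add: K_def)
  have K0: "K > 0" unfolding K_def using p C0 k by (simp add: add_nonneg_pos)
  define \<Phi> where "\<Phi> = (\<lambda>s. exp (K * (s + \<alpha>) powr (-k)))"
  have Phi1: "\<Phi> s \<ge> 1" for s
    unfolding \<Phi>_def using K0 by simp
  define y where "y = (\<lambda>z::real \<times> ((real^'d) \<times> (real^'d)). fst (snd z) - (fst z + \<alpha>) *\<^sub>R snd (snd z))"
  define Q where "Q = (\<lambda>z. 1 + y z \<bullet> y z)"
  define P where "P = (\<lambda>z. Q z powr (p/2) * \<Phi> (fst z))"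
  define F where "F = (\<lambda>(t::real,x::real^'d,v::real^'d). f t x v)"
  have Fz: "\<And>z. F z = f (fst z) (fst (snd z)) (snd (snd z))" by (simp add: F_def split_beta)
  have key: "\<sigma> * f t1 x1 v1 * P (t1,x1,v1) \<le> M * \<Phi> 0"
    if \<sigma>: "\<sigma> = 1 \<or> \<sigma> = -1" and t1: "t1 \<ge> 0" for \<sigma> t1 x1 v1
  proof -
    define c where "c = 2 + B"
    have c0: "c \<ge> 0" using B0 by (simp add: c_def)
    define R where "R = (1 + x1 \<bullet> x1 + v1 \<bullet> v1) * exp (c * t1)"
    define r where "r = sqrt R"
    define h where "h = (\<lambda>z::real \<times> ((real^'d) \<times> (real^'d)). (1 + fst (snd z) \<bullet> fst (snd z) + snd (snd z) \<bullet> snd (snd z)) * exp (c * fst z) - R)"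
    define D where "D = ({0..t1} \<times> (cball 0 r \<times> cball 0 r)) \<inter> {z. h z \<le> 0}"
    define u where "u = (\<lambda>z. \<sigma> * F z * P z)"
    have hcont: "continuous_on UNIV h" unfolding h_def by (intro continuous_intros)
    have "closed {z. h z \<le> 0}" using closed_Collect_le[OF hcont continuous_on_const] by simp
    hence cD: "compact D" unfolding D_def
      by (intro compact_Int_closed compact_Times compact_Icc compact_cball)
    have inball: "norm (fst (snd z)) \<le> r \<and> norm (snd (snd z)) \<le> r" if "fst z \<ge> 0" "h z \<le> 0" for z
    proof -
      define a where "a = fst (snd z)"
      define b where "b = snd (snd z)"
      have "1 + a \<bullet> a + b \<bullet> b \<le> (1 + a \<bullet> a + b \<bullet> b) * exp (c * fst z)"
      proof -
        have "1 \<le> exp (c * fst z)" using that(1) c0 by simp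
        moreover have "0 \<le> 1 + a \<bullet> a + b \<bullet> b" by (simp add: add_nonneg_nonneg)
        ultimately show ?thesis using mult_left_mono by fastforce
      qed
      also have "\<dots> \<le> R" using that(2) unfolding h_def a_def b_def by simp
      finally have ab0: "1 + a \<bullet> a + b \<bullet> b \<le> R" .
      have ab: "a \<bullet> a \<le> R" "b \<bullet> b \<le> R" using ab0 inner_ge_zero[of a] inner_ge_zero[of b] by linarith+
      have "norm a \<le> r" "norm b \<le> r" unfolding r_def norm_eq_sqrt_inner using ab
        by (simp_all add: real_sqrt_le_mono)
      thus ?thesis unfolding a_def b_def by simp
    qed
    have z1D: "(t1, x1, v1) \<in> D"
    proof -
      have "h (t1, x1, v1) = 0" unfolding h_def R_def by simp
      thus ?thesis using inball[of "(t1,x1,v1)"] t1 unfolding D_def by auto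
    qed
    have DS: "D \<subseteq> S" unfolding D_def S_def by auto
    have Pder: "(P has_derivative (\<lambda>dz. Q z powr (p/2) * (fst dz * (\<Phi> (fst z) * (K * (-k * (fst z + \<alpha>) powr (-k-1)))))
       + (2 * (y z \<bullet> (fst (snd dz) - fst dz *\<^sub>R snd (snd z) - (fst z + \<alpha>) *\<^sub>R snd (snd dz))) * (p/2 * Q z powr (p/2 - 1))) * \<Phi> (fst z))) (at z)"
      if "fst z \<ge> 0" for z
    proof -
      have "fst z + \<alpha> > 0" using that alpha_pos by simp
      from dP[OF this, of p K k]
      show ?thesis unfolding P_def Q_def y_def \<Phi>_def by simp
    qed
    have Fcont: "continuous_on S F"
      unfolding continuous_on_eq_continuous_within
      using dF has_derivative_continuous unfolding F_def by blast
    have Pcont: "continuous_on D P"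
    proof (rule continuous_at_imp_continuous_on, rule ballI)
      fix z assume "z \<in> D"
      hence "fst z \<ge> 0" unfolding D_def by auto
      from has_derivative_continuous[OF Pder[OF this]] show "isCont P z" .
    qed
    have ucont: "continuous_on D u" unfolding u_def
      by (intro continuous_on_mult continuous_on_const Pcont continuous_on_subset[OF Fcont DS])
    obtain zs where zsD: "zs \<in> D" and zsmax: "\<And>z. z \<in> D \<Longrightarrow> u z \<le> u zs"
      using continuous_attains_sup[OF cD _ ucont] z1D by blast
    obtain ts a b where zs: "zs = (ts, a, b)" by (metis prod_cases3)
    have ts: "0 \<le> ts" "ts \<le> t1" using zsD unfolding zs D_def by auto
    have "u zs \<le> M * \<Phi> 0"
    proof (cases "ts = 0")
      case True
      have "u zs = \<sigma> * (jbr (a - \<alpha> *\<^sub>R b) powr p * f0 a b) * \<Phi> 0"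
        unfolding u_def zs True P_def Q_def y_def jbr_powr by (simp add: Fz init)
      also have "\<dots> \<le> M * \<Phi> 0"
      proof (rule mult_right_mono)
        show "\<sigma> * (jbr (a - \<alpha> *\<^sub>R b) powr p * f0 a b) \<le> M"
          using M[of a b] \<sigma> by auto
        show "0 \<le> \<Phi> 0" using Phi1[of 0] by simp
      qed
      finally show ?thesis .
    next
      case False
      hence tspos: "ts > 0" using ts by simp
      have sF: "\<sigma> * F zs \<le> 0"
      proof (rule ccontr)
        assume pos: "\<not> \<sigma> * F zs \<le> 0"
        define E where "E = Efield f ts a"
        define W where "W = (1::real, b, E)"
        define T where "T = ts + \<alpha>"
        have Tpos: "T > 0" using tspos alpha_pos by (simp add: T_def)
        have Fat: "(F has_derivative blinfun_apply (Df zs)) (at zs)"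
        proof -
          have zsS: "zs \<in> S" using zsD DS by auto
          have "(F has_derivative blinfun_apply (Df zs)) (at zs within ({0<..} \<times> UNIV))"
            by (rule has_derivative_subset[OF dF[OF zsS, folded F_def]]) (auto simp: S_def)
          moreover have "at zs within ({0<..} \<times> UNIV) = at zs"
            by (rule at_within_open) (auto simp: zs tspos intro: open_Times)
          ultimately show ?thesis by simp
        qed
        have DfW: "blinfun_apply (Df zs) W = 0" unfolding zs W_def E_def using tr ts by simp
        obtain P' where Pat: "(P has_derivative P') (at zs)" and P'W: "P' W < 0"
        proof -
          have "fst zs \<ge> 0" using ts zs by simp
          note Pd = Pder[OF this]
          have "Q zs powr (p/2) * (fst W * (\<Phi> (fst zs) * (K * (-k * (fst zs + \<alpha>) powr (-k-1)))))
            + (2 * (y zs \<bullet> (fst (snd W) - fst W *\<^sub>R snd (snd zs) - (fst zs + \<alpha>) *\<^sub>R snd (snd W))) * (p/2 * Q zs powr (p/2 - 1))) * \<Phi> (fst zs) < 0"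
          proof -
            have "norm E \<le> C * T powr (-k-2)" unfolding E_def T_def using Ek ts by simp
            from PW_neg[OF Tpos p C0 Kk this, of "\<Phi> ts" "y zs"]
            show ?thesis unfolding Q_def W_def zs T_def using Phi1[of ts] by simp
          qed
          thus ?thesis using that[OF Pd] by blast
        qed
        have uat: "(u has_derivative (\<lambda>dz. \<sigma> * F zs * P' dz + \<sigma> * blinfun_apply (Df zs) dz * P zs)) (at zs)"
          unfolding u_def
          using has_derivative_mult[OF has_derivative_mult_right[OF Fat, of \<sigma>] Pat] by simp
        have hat: "(h has_derivative (\<lambda>dz. (2 * (fst (snd zs) \<bullet> fst (snd dz)) + 2 * (snd (snd zs) \<bullet> snd (snd dz))) * exp (c * fst zs)
           + (1 + fst (snd zs) \<bullet> fst (snd zs) + snd (snd zs) \<bullet> snd (snd zs)) * (fst dz * c * exp (c * fst zs)))) (at zs)"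
          unfolding h_def by (rule dh)
        have hW: "(2 * (a \<bullet> b) + 2 * (b \<bullet> E)) * exp (c * ts) + (1 + a \<bullet> a + b \<bullet> b) * (1 * c * exp (c * ts)) > 0"
        proof -
          define X where "X = 1 + a \<bullet> a + b \<bullet> b"
          have e: "exp (c * ts) > 0" by simp
          have nE: "norm E \<le> B" unfolding E_def using EB ts by simp
          have i1: "2 * (a \<bullet> b) \<ge> - (a \<bullet> a + b \<bullet> b)"
          proof -
            have "0 \<le> (a + b) \<bullet> (a + b)" by simp
            thus ?thesis by (simp add: inner_add_left inner_add_right inner_commute)
          qed
          have i2: "2 * (b \<bullet> E) \<ge> - ((1 + b \<bullet> b) * B)"
          proof -
            have "- (b \<bullet> E) \<le> norm b * norm E"
              by (metis Cauchy_Schwarz_ineq2 abs_le_D1 inner_minus_right norm_minus_cancel)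
            also have "\<dots> \<le> norm b * B" using nE by (simp add: mult_left_mono)
            finally have j1: "- (b \<bullet> E) \<le> norm b * B" .
            have "2 * norm b \<le> 1 + b \<bullet> b"
            proof -
              have "0 \<le> (norm b - 1)^2" by simp
              thus ?thesis by (simp add: power2_eq_square power2_norm_eq_inner[symmetric] algebra_simps)
            qed
            hence "(2 * norm b) * B \<le> (1 + b \<bullet> b) * B" using B0 by (rule mult_right_mono)
            thus ?thesis using j1 by simp
          qed
          have Xc: "X * c = 2 * X + X * B" unfolding c_def by (simp add: distrib_left)
          have XB: "X * B \<ge> (1 + b \<bullet> b) * B"
            unfolding X_def using B0 by (intro mult_right_mono) auto
          have aa: "a \<bullet> a \<ge> 0" "b \<bullet> b \<ge> 0" by auto
          define Y where "Y = (1 + b \<bullet> b) * B"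
          have "(2 * (a \<bullet> b) + 2 * (b \<bullet> E)) + X * c > 0"
            using i1 i2[folded Y_def] Xc XB[folded Y_def] aa X_def by linarith
          hence "((2 * (a \<bullet> b) + 2 * (b \<bullet> E)) + X * c) * exp (c * ts) > 0"
            using e by simp
          moreover have "((2 * (a \<bullet> b) + 2 * (b \<bullet> E)) + X * c) * exp (c * ts)
             = (2 * (a \<bullet> b) + 2 * (b \<bullet> E)) * exp (c * ts) + X * (1 * c * exp (c * ts))"
            by (simp add: distrib_right)
          ultimately show ?thesis unfolding X_def by simp
        qed
        have "0 \<le> \<sigma> * F zs * P' W + \<sigma> * blinfun_apply (Df zs) W * P zs"
        proof (rule maxdir[OF uat hat, of W ts])
          show "h zs \<le> 0" using zsD unfolding D_def by auto
          show "0 < (2 * (fst (snd zs) \<bullet> fst (snd W)) + 2 * (snd (snd zs) \<bullet> snd (snd W))) * exp (c * fst zs)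
           + (1 + fst (snd zs) \<bullet> fst (snd zs) + snd (snd zs) \<bullet> snd (snd zs)) * (fst W * c * exp (c * fst zs))"
            using hW unfolding zs W_def by simp
          show "0 < ts" by (rule tspos)
          fix s assume s: "0 < s" "s < ts" "h (zs - s *\<^sub>R W) \<le> 0"
          have fs: "fst (zs - s *\<^sub>R W) = ts - s" unfolding zs W_def by simp
          have eq: "zs - s *\<^sub>R W = (ts - s, a - s *\<^sub>R b, b - s *\<^sub>R E)" unfolding zs W_def by simp
          have h': "h (ts - s, a - s *\<^sub>R b, b - s *\<^sub>R E) \<le> 0" using s(3) eq by simp
          have nb: "norm (a - s *\<^sub>R b) \<le> r" "norm (b - s *\<^sub>R E) \<le> r"
            using inball[of "(ts - s, a - s *\<^sub>R b, b - s *\<^sub>R E)"] h' s ts by auto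
          have "(ts - s, a - s *\<^sub>R b, b - s *\<^sub>R E) \<in> D"
            unfolding D_def using h' nb s ts by (simp add: mem_cball_0)
          hence "zs - s *\<^sub>R W \<in> D" using eq by simp
          thus "u (zs - s *\<^sub>R W) \<le> u zs" by (rule zsmax)
        qed
        also have "\<sigma> * F zs * P' W + \<sigma> * blinfun_apply (Df zs) W * P zs = (\<sigma> * F zs) * P' W"
          using DfW by simp
        also have "\<dots> < 0" using pos P'W by (simp add: mult_pos_neg)
        finally show False by simp
      qed
      have "P zs \<ge> 0" unfolding P_def using Phi1[of "fst zs"] by simp
      hence "u zs \<le> 0" unfolding u_def using sF by (simp add: mult_nonpos_nonneg)
      also have "0 \<le> M * \<Phi> 0" using M0 Phi1[of 0] by simp
      finally show ?thesis .
    qed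
    moreover have "u (t1, x1, v1) \<le> u zs" by (rule zsmax[OF z1D])
    ultimately show ?thesis unfolding u_def by (simp add: Fz)
  qed
  show ?thesis
  proof (intro exI[of _ "M * \<Phi> 0"] allI impI)
    fix t :: real and x v :: "real^'d" assume t: "t \<ge> 0"
    have w: "jbr (x - (t + \<alpha>) *\<^sub>R v) powr p = Q (t,x,v) powr (p/2)"
      unfolding Q_def y_def jbr_powr by simp
    have "\<bar>f t x v\<bar> * Q (t,x,v) powr (p/2) \<le> \<bar>f t x v\<bar> * Q (t,x,v) powr (p/2) * \<Phi> t"
      using mult_left_mono[OF Phi1[of t], of "\<bar>f t x v\<bar> * Q (t,x,v) powr (p/2)"] by simp
    also have "\<dots> = (if f t x v \<ge> 0 then 1 else -1) * f t x v * P (t,x,v)"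
      unfolding P_def by auto
    also have "\<dots> \<le> M * \<Phi> 0" by (rule key) (use t in auto)
    finally show "\<bar>f t x v\<bar> * jbr (x - (t + \<alpha>) *\<^sub>R v) powr p \<le> M * \<Phi> 0" using w by simp
  qed
qed



lemma ball_meas:
  fixes c :: "real^'d" and r :: real
  assumes "r \<ge> 0"
  shows "emeasure lborel (ball c r) = ennreal (r ^ CARD('d) * measure lborel (ball (0::real^'d) 1))"
proof -
  have "emeasure lborel (ball c r) = ennreal (measure lborel (ball c r))"
    using emeasure_lborel_ball_finite[of c r] by (simp add: emeasure_eq_ennreal_measure)
  thus ?thesis using content_ball_conv_unit_ball[OF assms, of c] by simp
qed

lemma ptwise:
  fixes y :: "'a::real_normed_vector" and p :: real
  assumes p: "p > 0"
  shows "\<exists>k. norm y < 2 ^ k \<and> jbr y powr (-p) \<le> 2 powr p * (2 powr (-p)) ^ k"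
proof -
  obtain k0 where "norm y < 2 ^ k0" using real_arch_pow[of 2 "norm y"] by auto
  define k where "k = (LEAST k. norm y < (2::real) ^ k)"
  have k: "norm y < 2 ^ k" unfolding k_def by (rule LeastI[of _ k0]) fact
  have j1: "jbr y \<ge> 1" unfolding jbr_def by simp
  have jn: "norm y \<le> jbr y" unfolding jbr_def
    by (rule real_le_rsqrt) simp
  have "jbr y powr (-p) \<le> 2 powr p * (2 powr (-p)) ^ k"
  proof (cases k)
    case 0
    have "jbr y powr (-p) \<le> 1"
    proof -
      have "1 \<le> jbr y powr p" using j1 p by (simp add: ge_one_powr_ge_zero)
      thus ?thesis by (simp add: powr_minus inverse_le_1_iff)
    qed
    also have "1 \<le> 2 powr p" using p by (simp add: ge_one_powr_ge_zero)
    finally show ?thesis using 0 by simp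
  next
    case (Suc j)
    have "\<not> norm y < 2 ^ j" unfolding k_def
    proof
      assume "norm y < 2 ^ j"
      hence "k \<le> j" unfolding k_def by (rule Least_le)
      thus False using Suc by simp
    qed
    hence "2 ^ j \<le> jbr y" using jn by simp
    hence "jbr y powr (-p) \<le> (2 ^ j) powr (-p)"
      using p by (intro powr_mono2') auto
    also have "(2 ^ j) powr (-p) = (2 powr (-p)) ^ j"
      by (simp add: powr_power powr_realpow[symmetric] powr_powr mult.commute)
    also have "\<dots> = 2 powr p * (2 powr (-p)) ^ k"
      using Suc by (simp add: powr_minus field_simps)
    finally show ?thesis .
  qed
  thus ?thesis using k by blast
qed

lemma jbr_int:
  fixes c :: "real^'d" and s p A :: real
  assumes s: "s > 0" and p: "p > real CARD('d)" and A: "A \<ge> 0"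
  shows "(\<integral>\<^sup>+v. ennreal (A * jbr (c - s *\<^sub>R v) powr (-p)) \<partial>lborel)
     \<le> ennreal (A * (2 powr p * measure lborel (ball (0::real^'d) 1) / (1 - 2 powr (real CARD('d) - p))) / s ^ CARD('d))"
proof -
  define \<omega> where "\<omega> = measure lborel (ball (0::real^'d) 1)"
  have \<omega>0: "\<omega> \<ge> 0" unfolding \<omega>_def by simp
  define q where "q = 2 powr (real CARD('d) - p)"
  have "(2::real) powr (real CARD('d) - p) < 2 powr 0"
    using p by (subst powr_less_cancel_iff) auto
  hence q: "0 < q" "q < 1" unfolding q_def by auto
  define a where "a = (\<lambda>k::nat. A * (2 powr p * (2 powr (-p)) ^ k))"
  define Bk where "Bk = (\<lambda>k::nat. ball ((1/s) *\<^sub>R c) (2 ^ k / s))"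
  have p0: "p > 0" using p by (smt (verit) of_nat_0_le_iff)
  have mem: "v \<in> Bk k \<longleftrightarrow> norm (c - s *\<^sub>R v) < 2 ^ k" for v k
  proof -
    have "(1/s) *\<^sub>R c - v = (1/s) *\<^sub>R (c - s *\<^sub>R v)" using s by (simp add: algebra_simps)
    hence "dist ((1/s) *\<^sub>R c) v = norm (c - s *\<^sub>R v) / s" using s by (simp add: dist_norm)
    thus ?thesis unfolding Bk_def using s by (simp add: divide_less_cancel)
  qed
  have pw: "ennreal (A * jbr (c - s *\<^sub>R v) powr (-p)) \<le> (\<Sum>k. ennreal (a k) * indicator (Bk k) v)" for v
  proof -
    obtain k where k: "norm (c - s *\<^sub>R v) < 2 ^ k" "jbr (c - s *\<^sub>R v) powr (-p) \<le> 2 powr p * (2 powr (-p)) ^ k"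
      using ptwise[OF p0] by blast
    have "ennreal (A * jbr (c - s *\<^sub>R v) powr (-p)) \<le> ennreal (a k)"
      unfolding a_def using k(2) A by (intro ennreal_leI mult_left_mono) auto
    also have "\<dots> = (\<Sum>k'\<in>{k}. ennreal (a k') * indicator (Bk k') v)" using k(1) mem by simp
    also have "\<dots> \<le> (\<Sum>k. ennreal (a k) * indicator (Bk k) v)"
      by (rule sum_le_suminf) auto
    finally show ?thesis .
  qed
  have "(\<integral>\<^sup>+v. ennreal (A * jbr (c - s *\<^sub>R v) powr (-p)) \<partial>lborel)
      \<le> (\<integral>\<^sup>+v. (\<Sum>k. ennreal (a k) * indicator (Bk k) v) \<partial>lborel)"
    by (rule nn_integral_mono) (rule pw)
  also have "\<dots> = (\<Sum>k. \<integral>\<^sup>+v. ennreal (a k) * indicator (Bk k) v \<partial>lborel)"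
    by (rule nn_integral_suminf) (auto simp: Bk_def intro!: borel_measurable_times_ennreal borel_measurable_indicator)
  also have "\<dots> = (\<Sum>k. ennreal (a k) * emeasure lborel (Bk k))"
    by (subst nn_integral_cmult_indicator) (auto simp: Bk_def)
  also have "\<dots> = (\<Sum>k. ennreal (A * 2 powr p * \<omega> / s ^ CARD('d) * q ^ k))"
  proof (rule suminf_cong)
    fix k :: nat
    have "emeasure lborel (Bk k) = ennreal ((2 ^ k / s) ^ CARD('d) * \<omega>)"
      unfolding Bk_def \<omega>_def using s by (intro ball_meas) simp
    moreover have "a k * ((2 ^ k / s) ^ CARD('d) * \<omega>) = A * 2 powr p * \<omega> / s ^ CARD('d) * q ^ k"
    proof -
      have "(2 powr (-p)) ^ k * (2 ^ k) ^ CARD('d) = q ^ k"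
      proof -
        have "(2::real) ^ CARD('d) = 2 powr real CARD('d)" by (simp add: powr_realpow)
        hence "2 powr (-p) * 2 ^ CARD('d) = q" unfolding q_def by (simp add: powr_add[symmetric])
        moreover have "((2::real) ^ k) ^ CARD('d) = (2 ^ CARD('d)) ^ k"
          by (metis power_mult mult.commute)
        ultimately show ?thesis by (metis power_mult_distrib)
      qed
      thus ?thesis unfolding a_def by (simp add: power_divide field_simps)
    qed
    ultimately show "ennreal (a k) * emeasure lborel (Bk k) = ennreal (A * 2 powr p * \<omega> / s ^ CARD('d) * q ^ k)"
      using A \<omega>0 unfolding a_def by (simp add: ennreal_mult'[symmetric])
  qed
  also have "\<dots> = ennreal (A * 2 powr p * \<omega> / s ^ CARD('d) * (1 / (1 - q)))"
  proof (rule suminf_ennreal_eq)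
    show "(\<lambda>k. A * 2 powr p * \<omega> / s ^ CARD('d) * q ^ k) sums (A * 2 powr p * \<omega> / s ^ CARD('d) * (1 / (1 - q)))"
      by (rule sums_mult[OF geometric_sums]) (use q in simp)
    show "0 \<le> A * 2 powr p * \<omega> / s ^ CARD('d) * q ^ k" for k
      using q A \<omega>0 s by simp
  qed
  also have "\<dots> = ennreal (A * (2 powr p * \<omega> / (1 - q)) / s ^ CARD('d))"
    by (simp add: field_simps)
  finally show ?thesis unfolding q_def \<omega>_def .
qed

theorem lemma3p1:
  fixes f :: "real \<Rightarrow> real^'d \<Rightarrow> real^'d \<Rightarrow> real"
    and f0 :: "real^'d \<Rightarrow> real^'d \<Rightarrow> real"
    and \<alpha> p :: real and n :: nat
  assumes d4: "CARD('d) \<ge> 4"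
    and alpha_pos: "\<alpha> > 0"
    and f0_C10: "C1_0 (\<lambda>(x,v). f0 x v)"
    and f0_nonneg: "\<forall>x v. f0 x v \<ge> 0"
    and p_gt: "p > real CARD('d) + 1"
    and f0_weighted: "W1inf (\<lambda>(x,v). jbr (x - \<alpha> *\<^sub>R v) powr p * f0 x v)"
    and sol: "classical_solution f f0"
    and E_decay: "\<exists>C. \<forall>t\<ge>0. \<forall>x. norm (Efield f t x) \<le> C * (t + \<alpha>) powr (1 - real CARD('d))"
    and n_gt: "n > CARD('d) * (CARD('d) - 1)"
    and moments: "\<forall>k\<le>n. \<exists>C. \<forall>t\<ge>0. Mom f \<alpha> k t \<le> C"
  shows "(\<exists>C. \<forall>t\<ge>0. bdd_above (Gweight f \<alpha> p t) \<and> Gcal f \<alpha> p t \<le> C) \<and>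
         (\<exists>C. \<forall>t\<ge>0. \<forall>x. \<bar>rho f t x\<bar> \<le> C * (t + \<alpha>) powr (- real CARD('d)))"
proof -
  have p0: "p > 0" using p_gt by (smt (verit) of_nat_0_le_iff)
  obtain A where A: "\<forall>t\<ge>0. \<forall>x v. \<bar>f t x v\<bar> * jbr (x - (t + \<alpha>) *\<^sub>R v) powr p \<le> A"
    using weighted_bound[OF d4 alpha_pos p0 f0_weighted sol E_decay] by blast
  have A0: "A \<ge> 0" using A by (metis order_trans mult_nonneg_nonneg abs_ge_zero powr_ge_zero order_refl)
  have part1: "\<exists>C. \<forall>t\<ge>0. bdd_above (Gweight f \<alpha> p t) \<and> Gcal f \<alpha> p t \<le> C"
  proof (intro exI[of _ "1 + A"] allI impI conjI)
    fix t :: real assume t: "t \<ge> 0"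
    have le: "w \<le> A" if wG: "w \<in> Gweight f \<alpha> p t" for w
    proof -
      obtain x v where w: "w = jbr x powr p * gfun f \<alpha> t x v"
        using wG unfolding Gweight_def by auto
      have "w \<le> \<bar>f t (x + (t + \<alpha>) *\<^sub>R v) v\<bar> * jbr ((x + (t + \<alpha>) *\<^sub>R v) - (t + \<alpha>) *\<^sub>R v) powr p"
        unfolding w gfun_def by (simp add: mult.commute mult_left_mono)
      also have "\<dots> \<le> A" using A t by blast
      finally show ?thesis .
    qed
    show "bdd_above (Gweight f \<alpha> p t)" using le by (auto simp: bdd_above_def)
    have "Sup (Gweight f \<alpha> p t) \<le> A"
      by (rule cSup_least) (use le in \<open>auto simp: Gweight_def\<close>)
    thus "Gcal f \<alpha> p t \<le> 1 + A" unfolding Gcal_def by simp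
  qed
  define G where "G = 2 powr p * measure lborel (ball (0::real^'d) 1) / (1 - 2 powr (real CARD('d) - p))"
  have "(2::real) powr (real CARD('d) - p) < 2 powr 0"
    using p_gt by (subst powr_less_cancel_iff) auto
  hence G0: "G \<ge> 0" unfolding G_def by (intro divide_nonneg_pos mult_nonneg_nonneg) auto
  have integ: "\<forall>t\<ge>0. \<forall>x. integrable lborel (\<lambda>v. f t x v)"
    using sol unfolding classical_solution_def by (elim conjE)
  have part2: "\<exists>C. \<forall>t\<ge>0. \<forall>x. \<bar>rho f t x\<bar> \<le> C * (t + \<alpha>) powr (- real CARD('d))"
  proof (intro exI[of _ "A * G"] allI impI)
    fix t :: real and x :: "real^'d" assume t: "t \<ge> 0"
    define s where "s = t + \<alpha>"
    have s: "s > 0" using t alpha_pos by (simp add: s_def)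
    have pw: "ennreal (norm (f t x v)) \<le> ennreal (A * jbr (x - s *\<^sub>R v) powr (-p))" for v
    proof -
      define J where "J = jbr (x - s *\<^sub>R v) powr p"
      have "1 + (norm (x - s *\<^sub>R v))\<^sup>2 > 0" by (simp add: add_pos_nonneg)
      hence J: "J > 0" unfolding J_def jbr_def by simp
      have "\<bar>f t x v\<bar> * J \<le> A" using A t unfolding J_def s_def by blast
      hence "\<bar>f t x v\<bar> \<le> A / J" using J by (simp add: pos_le_divide_eq)
      also have "A / J = A * jbr (x - s *\<^sub>R v) powr (-p)"
        unfolding J_def by (simp add: powr_minus divide_inverse)
      finally show ?thesis by (intro ennreal_leI) simp
    qed
    have "ennreal \<bar>rho f t x\<bar> = ennreal (norm (LINT v|lborel. f t x v))" unfolding rho_def by simp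
    also have "\<dots> \<le> (\<integral>\<^sup>+v. norm (f t x v) \<partial>lborel)"
      by (rule integral_norm_bound_ennreal) (use integ t in blast)
    also have "\<dots> \<le> (\<integral>\<^sup>+v. ennreal (A * jbr (x - s *\<^sub>R v) powr (-p)) \<partial>lborel)"
      by (rule nn_integral_mono) (rule pw)
    also have "\<dots> \<le> ennreal (A * G / s ^ CARD('d))"
      unfolding G_def using jbr_int[OF s _ A0, of p x] p_gt by simp
    finally have "\<bar>rho f t x\<bar> \<le> A * G / s ^ CARD('d)"
      by (subst (asm) ennreal_le_iff) (use A0 s G0 in simp)
    also have "A * G / s ^ CARD('d) = A * G * s powr (- real CARD('d))"
      using s by (simp add: powr_minus powr_realpow divide_inverse)
    finally show "\<bar>rho f t x\<bar> \<le> A * G * (t + \<alpha>) powr (- real CARD('d))" unfolding s_def .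
  qed
  show ?thesis using part1 part2 by blast
qed

end
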